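(* $\mathrm{rk}(|\Phi^3\rangle)=7$, where $|\Phi^3\rangle=|\Phi\rangle_{AB}|\Phi\rangle_{AC}|\Phi\rangle_{BC}$ with $|\Phi\rangle=|00\rangle+|11\rangle$, viewed as a tripartite tensor in $(\mathbb{C}^2\otimes\mathbb{C}^2)_A\otimes(\mathbb{C}^2\otimes\mathbb{C}^2)_B\otimes(\mathbb{C}^2\otimes\mathbb{C}^2)_C$ (party $A$ holds one qubit of the $AB$ pair and one of the $AC$ pair, and similarly for $B$ and $C$).
   Context: The tensor rank $\mathrm{rk}(|\phi\rangle)$ of $|\phi\rangle\in H_A\otimes H_B\otimes H_C$ is the minimum $r$ such that $|\phi\rangle=\sum_{j=1}^r|a_j\rangle|b_j\rangle|c_j\rangle$ with $|a_j\rangle\in H_A,|b_j\rangle\in H_B,|c_j\rangle\in H_C$. *)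

theory Defs
  imports Complex_Main
begin

text \<open>Tripartite tensors in H_A \<otimes> H_B \<otimes> H_C are represented by their coefficient
  functions with respect to fixed bases indexed by types 'a, 'b, 'c.\<close>

definition tensor_rank :: "('a \<Rightarrow> 'b \<Rightarrow> 'c \<Rightarrow> complex) \<Rightarrow> nat" where
  "tensor_rank T = (LEAST r. \<exists>(a :: nat \<Rightarrow> 'a \<Rightarrow> complex) (b :: nat \<Rightarrow> 'b \<Rightarrow> complex)
       (c :: nat \<Rightarrow> 'c \<Rightarrow> complex).
       T = (\<lambda>i j k. \<Sum>l<r. a l i * b l j * c l k))"

text \<open>Unnormalized EPR pair |00> + |11> on C^2 \<otimes> C^2, basis of C^2 indexed by bool.\<close>
definition Phi :: "bool \<Rightarrow> bool \<Rightarrow> complex" where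
  "Phi x y = (if x = y then 1 else 0)"

definition Phi3 :: "bool \<times> bool \<Rightarrow> bool \<times> bool \<Rightarrow> bool \<times> bool \<Rightarrow> complex" where
  "Phi3 = (\<lambda>(a1, a2) (b1, b2) (c1, c2). Phi a1 b1 * Phi a2 c1 * Phi b2 c2)"

end

theory Submission
  imports Defs "HOL-Analysis.Analysis"
begin

type_synonym q = "bool \<times> bool"
type_synonym m2 = "complex^(bool \<times> bool)"

lemma UNIV_q: "(UNIV :: q set) = {(False,False),(False,True),(True,False),(True,True)}"
  by (auto simp: UNIV_bool)

lemma sum_q: "(\<Sum>p\<in>(UNIV::q set). f p) = f (False,False) + f (False,True) + f (True,False) + f (True,True)"
  by (simp add: UNIV_q add.assoc)

lemma vq_eq: "(x::m2) = y \<longleftrightarrow> x$(False,False) = y$(False,False) \<and> x$(False,True) = y$(False,True)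
   \<and> x$(True,False) = y$(True,False) \<and> x$(True,True) = y$(True,True)"
  by (auto simp: vec_eq_iff UNIV_q) (metis (full_types) prod.collapse)

definition dotp :: "m2 \<Rightarrow> m2 \<Rightarrow> complex" where "dotp f X = (\<Sum>p\<in>UNIV. f$p * X$p)"
definition mm :: "m2 \<Rightarrow> m2 \<Rightarrow> m2" where
  "mm X Y = (\<chi> p. X$(fst p,False)*Y$(False,snd p) + X$(fst p,True)*Y$(True,snd p))"
definition one2 :: m2 where "one2 = (\<chi> p. if fst p = snd p then 1 else 0)"
definition det2 :: "m2 \<Rightarrow> complex" where
  "det2 X = X$(False,False)*X$(True,True) - X$(False,True)*X$(True,False)"
definition bf :: "m2 \<Rightarrow> m2 \<Rightarrow> complex" where
  "bf X Y = X$(False,False)*Y$(True,True) + X$(True,True)*Y$(False,False) - X$(False,True)*Y$(True,False) - X$(True,False)*Y$(False,True)"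
definition inv2 :: "m2 \<Rightarrow> m2" where
  "inv2 X = (\<chi> p. (if p = (False,False) then X$(True,True) else if p = (True,True) then X$(False,False)
     else - X$p) / det2 X)"

lemma dotp_expand: "dotp f X = f$(False,False)*X$(False,False) + f$(False,True)*X$(False,True) + f$(True,False)*X$(True,False) + f$(True,True)*X$(True,True)"
  by (simp add: dotp_def sum_q)

lemma mm_comp: "mm X Y $ (i,j) = X$(i,False)*Y$(False,j) + X$(i,True)*Y$(True,j)"
  by (simp add: mm_def)

lemma mm_assoc: "mm (mm X Y) Z = mm X (mm Y Z)"
  by (simp add: vq_eq mm_comp algebra_simps)

lemma mm_one_left[simp]: "mm one2 X = X" and mm_one_right[simp]: "mm X one2 = X"
  by (simp_all add: vq_eq mm_comp one2_def)

lemma inv2_comp: "inv2 X $ (False,False) = X$(True,True) / det2 X" "inv2 X $ (True,True) = X$(False,False) / det2 X"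
  "inv2 X $ (False,True) = - X$(False,True) / det2 X" "inv2 X $ (True,False) = - X$(True,False) / det2 X"
  by (simp_all add: inv2_def)
lemma inv2_left: assumes "det2 X \<noteq> 0" shows "mm (inv2 X) X = one2"
  unfolding vq_eq mm_comp one2_def inv2_comp using assms
  by (simp add: field_simps) (simp add: det2_def algebra_simps)
lemma inv2_right: assumes "det2 X \<noteq> 0" shows "mm X (inv2 X) = one2"
  unfolding vq_eq mm_comp one2_def inv2_comp using assms
  by (simp add: field_simps) (simp add: det2_def algebra_simps)

lemma mm_add_right: "mm X (Y + Z) = mm X Y + mm X Z"
  by (simp add: vq_eq mm_comp algebra_simps)
lemma mm_add_left: "mm (Y + Z) X = mm Y X + mm Z X"
  by (simp add: vq_eq mm_comp algebra_simps)
lemma mm_diff_right: "mm X (Y - Z) = mm X Y - mm X Z"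
  by (simp add: vq_eq mm_comp algebra_simps)
lemma mm_smult_right: "mm X (c *s Y) = c *s mm X Y"
  by (simp add: vq_eq mm_comp algebra_simps)
lemma mm_smult_left: "mm (c *s X) Y = c *s mm X Y"
  by (simp add: vq_eq mm_comp algebra_simps)
lemma mm_zero_right[simp]: "mm X 0 = 0"
  by (simp add: vq_eq mm_comp)
lemma mm_sum_right: "mm X (\<Sum>k\<in>S. F k) = (\<Sum>k\<in>S. mm X (F k))"
  by (induction S rule: infinite_finite_induct) (auto simp: mm_add_right)

lemma dotp_add: "dotp f (X + Y) = dotp f X + dotp f Y"
  by (simp add: dotp_expand algebra_simps)
lemma dotp_smult: "dotp f (c *s X) = c * dotp f X"
  by (simp add: dotp_expand algebra_simps)
lemma dotp_zero[simp]: "dotp f 0 = 0" by (simp add: dotp_def)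
lemma dotp_sum: "dotp f (\<Sum>k\<in>S. F k) = (\<Sum>k\<in>S. dotp f (F k))"
  by (induction S rule: infinite_finite_induct) (simp_all add: dotp_add dotp_zero)
lemma dotp_smult_left: "dotp (c *s f) X = c * dotp f X"
  by (simp add: dotp_expand algebra_simps)

lemma det2_add: "det2 (X + Y) = det2 X + det2 Y + bf X Y"
  by (simp add: det2_def bf_def algebra_simps)
lemma bf_self: "bf X X = 2 * det2 X"
  by (simp add: det2_def bf_def algebra_simps)
lemma bf_sum_left: "bf (\<Sum>k\<in>S. c k *s F k) Y = (\<Sum>k\<in>S. c k * bf (F k) Y)"
  by (induction S rule: infinite_finite_induct) (auto simp: bf_def algebra_simps)
lemma bf_sum_right: "bf Y (\<Sum>k\<in>S. c k *s F k) = (\<Sum>k\<in>S. c k * bf Y (F k))"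
  by (induction S rule: infinite_finite_induct) (auto simp: bf_def algebra_simps)
lemma bf_one: "bf one2 one2 = 2"
  by (simp add: bf_def one2_def)
lemma det2_mm: "det2 (mm X Y) = det2 X * det2 Y"
  by (simp add: det2_def mm_comp algebra_simps)

lemma axis_c: "axis i x $ j = (if j = i then x else 0)" by (simp add: axis_def)

lemma dotp_axis: "dotp f (axis p 1) = f $ p"
  by (simp add: dotp_def axis_def if_distrib cong: if_cong)

lemma biorth:
  fixes f N :: "q \<Rightarrow> m2"
  assumes E: "\<And>V. V = (\<Sum>k\<in>UNIV. dotp (f k) V *s N k)"
  shows "dotp (f k) (N k') = (if k = k' then 1 else 0)"
proof -
  define Fm :: "complex^q^q" where "Fm = (\<chi> k. f k)"
  define Nm :: "complex^q^q" where "Nm = (\<chi> p. \<chi> k. N k $ p)"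
  have "Nm ** Fm = mat 1"
  proof -
    have "(Nm ** Fm) $ p $ p' = mat 1 $ p $ p'" for p p'
    proof -
      have "axis p' 1 $ p = (\<Sum>k\<in>UNIV. dotp (f k) (axis p' 1) *s N k) $ p"
        using E[of "axis p' 1"] by simp
      then have "(if p = p' then 1 else 0) = (\<Sum>k\<in>UNIV. f k $ p' * N k $ p)"
        by (simp add: dotp_axis sum_component axis_c)
      then show ?thesis
        by (simp add: matrix_matrix_mult_def Nm_def Fm_def mat_def mult.commute)
    qed
    then show ?thesis by (simp add: vec_eq_iff)
  qed
  then have "Fm ** Nm = mat 1" using matrix_left_right_inverse by blast
  then have "(Fm ** Nm) $ k $ k' = mat 1 $ k $ k'" by simp
  then show ?thesis
    by (simp add: matrix_matrix_mult_def Nm_def Fm_def mat_def dotp_def)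
qed

lemma select_dual:
  fixes A N :: "nat \<Rightarrow> m2"
  assumes E: "\<And>X. X = (\<Sum>l<n. dotp (A l) X *s N l)"
  shows "\<exists>(g::q\<Rightarrow>nat) u. inj g \<and> (\<forall>k. g k < n) \<and> (\<forall>k k'. dotp (A (g k)) (u k') = (if k = k' then 1 else 0))
     \<and> (\<forall>w. w = (\<Sum>k\<in>UNIV. dotp (A (g k)) w *s u k))"
proof -
  have ax: "axis p 1 = (\<Sum>l<n. (N l $ p) *s A l)" for p
  proof -
    have "axis p' 1 $ p = (\<Sum>l<n. dotp (A l) (axis p' 1) *s N l) $ p" for p'
      using E[of "axis p' 1"] by simp
    then have "(if p = p' then 1 else 0) = (\<Sum>l<n. A l $ p' * N l $ p)" for p'
      by (simp add: dotp_axis sum_component axis_c)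
    note hh = this
    show ?thesis
    proof (subst vec_eq_iff, intro allI)
      fix i
      show "axis p 1 $ i = (\<Sum>l<n. (N l $ p) *s A l) $ i"
        using hh[of i] by (auto simp: sum_component axis_c mult.commute)
    qed
  qed
  have sp: "vec.span (A ` {..<n}) = UNIV"
  proof -
    have "w \<in> vec.span (A ` {..<n})" for w
    proof -
      have "axis p 1 \<in> vec.span (A ` {..<n})" for p
        unfolding ax by (intro vec.span_sum vec.span_scale vec.span_base) auto
      then have "(\<Sum>p\<in>UNIV. (w$p) *s axis p 1) \<in> vec.span (A ` {..<n})"
        by (intro vec.span_sum vec.span_scale) auto
      then show ?thesis by (simp add: basis_expansion)
    qed
    then show ?thesis by auto
  qed
  obtain B where B: "B \<subseteq> A ` {..<n}" "vec.independent B" "A ` {..<n} \<subseteq> vec.span B"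
    using vec.maximal_independent_subset by blast
  have spB: "vec.span B = UNIV"
    using B(3) sp by (metis top.extremum_uniqueI vec.span_minimal vec.subspace_span)
  have finB: "finite B" using B(1) finite_subset by blast
  have cB: "card B = CARD(q)"
    using vec.basis_card_eq_dim[of B UNIV] B(2) spB by (simp add: card_cart_basis)
  obtain h where h: "bij_betw h (UNIV::q set) B"
    using finite_same_card_bij[of "UNIV::q set" B] finB cB by auto
  define Rm :: "complex^q^q" where "Rm = (\<chi> k. h k)"
  have "rows Rm = B"
    using h by (auto simp: rows_def row_def Rm_def bij_betw_def)
  then obtain X :: "complex^q^q" where X: "X ** Rm = mat 1"
    using matrix_left_invertible_span_rows_gen[of Rm] spB by auto
  then have X2: "Rm ** X = mat 1" using matrix_left_right_inverse by blast
  define u where "u k = column k X" for k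
  have du: "dotp (h k) (u k') = (if k = k' then 1 else 0)" for k k'
  proof -
    have "(Rm ** X) $ k $ k' = mat 1 $ k $ k'" using X2 by simp
    then show ?thesis by (simp add: matrix_matrix_mult_def Rm_def mat_def dotp_def u_def column_def)
  qed
  have ex: "w = (\<Sum>k\<in>UNIV. dotp (h k) w *s u k)" for w
  proof -
    have "w = X *v (Rm *v w)" by (simp add: matrix_vector_mul_assoc X)
    also have "Rm *v w = (\<chi> k. dotp (h k) w)"
      by (simp add: vec_eq_iff matrix_vector_mult_def Rm_def dotp_def)
    finally show ?thesis by (simp add: matrix_mult_sum u_def)
  qed
  define g where "g k = (SOME l. l < n \<and> A l = h k)" for k
  have gk: "g k < n \<and> A (g k) = h k" for k
  proof -
    have "h k \<in> A ` {..<n}" using h B(1) by (auto simp: bij_betw_def)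
    then have "\<exists>l. l < n \<and> A l = h k" by auto
    then show ?thesis unfolding g_def by (rule someI_ex)
  qed
  have "inj g"
  proof
    fix k k' assume "g k = g k'"
    then have "h k = h k'" using gk by metis
    then show "k = k'" using h by (metis bij_betw_imp_inj_on inj_onD UNIV_I)
  qed
  moreover have "\<forall>k k'. dotp (A (g k)) (u k') = (if k = k' then 1 else 0)" using gk du by simp
  moreover have "\<forall>w. w = (\<Sum>k\<in>UNIV. dotp (A (g k)) w *s u k)" using gk ex by simp
  ultimately show ?thesis using gk by blast
qed

lemma det_sum:
  "(\<Sum>k\<in>S. d k * a k) * (\<Sum>k\<in>S. e k * b k) - (\<Sum>k\<in>S. d k * b k) * (\<Sum>k\<in>S. e k * a k)
   = (\<Sum>k\<in>S. \<Sum>k'\<in>S. d k * e k' * (a k * b k' - b k * a k'))" for a b d e :: "'a \<Rightarrow> complex"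
proof -
  have 1: "(\<Sum>k\<in>S. d k * a k) * (\<Sum>k\<in>S. e k * b k) = (\<Sum>k\<in>S. \<Sum>k'\<in>S. d k * e k' * (a k * b k'))"
    unfolding sum_product by (simp add: algebra_simps)
  have 2: "(\<Sum>k\<in>S. d k * b k) * (\<Sum>k\<in>S. e k * a k) = (\<Sum>k\<in>S. \<Sum>k'\<in>S. d k * e k' * (b k * a k'))"
    unfolding sum_product by (simp add: algebra_simps)
  show ?thesis unfolding 1 2 by (simp add: sum_subtractf[symmetric] right_diff_distrib)
qed

definition dg :: "complex \<Rightarrow> complex \<Rightarrow> m2" where
  "dg a b = (\<chi> p. if p = (False,False) then a else if p = (True,True) then b else 0)"

lemma row_pair:
  fixes N f :: "q \<Rightarrow> m2"
  assumes E1: "\<And>V. V = (\<Sum>k\<in>UNIV. dotp (f k) V *s N k)"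
  shows "\<exists>k k'. N k $ (r,False) * N k' $ (r,True) - N k $ (r,True) * N k' $ (r,False) \<noteq> 0"
proof (rule ccontr)
  assume "\<not> ?thesis"
  then have z: "\<And>k k'. N k $ (r,False) * N k' $ (r,True) - N k $ (r,True) * N k' $ (r,False) = 0" by blast
  have c: "(if p = cc then 1 else 0) = (\<Sum>k\<in>UNIV. f k $ cc * N k $ p)" for cc p
  proof -
    have "axis cc 1 = (\<Sum>k\<in>UNIV. dotp (f k) (axis cc 1) *s N k)" by (rule E1)
    then have "axis cc 1 $ p = (\<Sum>k\<in>UNIV. dotp (f k) (axis cc 1) *s N k) $ p" by (rule arg_cong)
    then show ?thesis by (simp only: sum_component vector_smult_component dotp_axis axis_c)
  qed
  have c1: "(\<Sum>k\<in>UNIV. f k $ (r,False) * N k $ (r,False)) = 1" using c[of "(r,False)" "(r,False)"] by simp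
  have c2: "(\<Sum>k\<in>UNIV. f k $ (r,True) * N k $ (r,True)) = 1" using c[of "(r,True)" "(r,True)"] by simp
  have c3: "(\<Sum>k\<in>UNIV. f k $ (r,False) * N k $ (r,True)) = 0" using c[of "(r,True)" "(r,False)"] by simp
  have c4: "(\<Sum>k\<in>UNIV. f k $ (r,True) * N k $ (r,False)) = 0" using c[of "(r,False)" "(r,True)"] by simp
  have "(\<Sum>k\<in>UNIV. f k $ (r,False) * N k $ (r,False)) * (\<Sum>k\<in>UNIV. f k $ (r,True) * N k $ (r,True))
       - (\<Sum>k\<in>UNIV. f k $ (r,False) * N k $ (r,True)) * (\<Sum>k\<in>UNIV. f k $ (r,True) * N k $ (r,False))
     = (\<Sum>k\<in>UNIV. \<Sum>k'\<in>UNIV. f k $ (r,False) * f k' $ (r,True) * (N k $ (r,False) * N k' $ (r,True) - N k $ (r,True) * N k' $ (r,False)))"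
    by (rule det_sum)
  also have "\<dots> = 0" by (simp only: z mult_zero_right sum.neutral_const)
  finally show False unfolding c1 c2 c3 c4 by simp
qed

lemma p6_diag:
  fixes N f :: "q \<Rightarrow> m2" and Q R :: m2 and \<mu> \<kappa> \<rho> :: "q \<Rightarrow> complex"
  assumes E1: "\<And>V. V = (\<Sum>k\<in>UNIV. dotp (f k) V *s N k)"
    and E3: "\<And>k. mm (dg p1 p2) (N k) = \<mu> k *s N k"
    and E4: "\<And>k. mm Q (N k) - \<kappa> k *s N k = \<rho> k *s R"
    and pp: "p1 \<noteq> p2"
  shows "Q $ (False,True) = 0 \<and> Q $ (True,False) = 0"
proof -
  have e3: "p1 * N k $ (False,c) = \<mu> k * N k $ (False,c)" "p2 * N k $ (True,c) = \<mu> k * N k $ (True,c)" for k c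
    using arg_cong[OF E3[of k], of "\<lambda>X. X $ (False,c)"] arg_cong[OF E3[of k], of "\<lambda>X. X $ (True,c)"]
    by (simp_all add: mm_comp dg_def)
  have r1: "N k $ (True,c) = 0" if "N k $ (False,c') \<noteq> 0" for k c c'
  proof -
    have "\<mu> k = p1" using e3(1)[of k c'] that by simp
    then show ?thesis using e3(2)[of k c] pp by simp
  qed
  have r2: "N k $ (False,c) = 0" if "N k $ (True,c') \<noteq> 0" for k c c'
  proof -
    have "\<mu> k = p2" using e3(2)[of k c'] that by simp
    then show ?thesis using e3(1)[of k c] pp by simp
  qed
  have e4: "Q$(r,False) * N k $ (False,c) + Q$(r,True) * N k $ (True,c) - \<kappa> k * N k $ (r,c) = \<rho> k * R $ (r,c)" for k r c
    using arg_cong[OF E4[of k], of "\<lambda>X. X $ (r,c)"] by (simp add: mm_comp)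
  obtain k k' where kk: "N k $ (False,False) * N k' $ (False,True) - N k $ (False,True) * N k' $ (False,False) \<noteq> 0"
    using row_pair[OF E1, of False] by blast
  have "N k $ (False,False) \<noteq> 0 \<or> N k $ (False,True) \<noteq> 0" "N k' $ (False,False) \<noteq> 0 \<or> N k' $ (False,True) \<noteq> 0"
    using kk by auto
  then have nz: "\<exists>c. N k $ (False,c) \<noteq> 0" "\<exists>c. N k' $ (False,c) \<noteq> 0" by blast+
  have z1: "N k $ (True,c) = 0" "N k' $ (True,c) = 0" for c using nz r1 by blast+
  have a: "Q$(True,False) * N j $ (False,c) = \<rho> j * R $ (True,c)" if "j = k \<or> j = k'" for j c
    using e4[of True j c] z1 that by auto
  have "Q$(True,False)^2 * (N k $ (False,False) * N k' $ (False,True) - N k $ (False,True) * N k' $ (False,False))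
     = (Q$(True,False) * N k $ (False,False)) * (Q$(True,False) * N k' $ (False,True)) - (Q$(True,False) * N k $ (False,True)) * (Q$(True,False) * N k' $ (False,False))"
    by (simp add: power2_eq_square algebra_simps)
  also have "\<dots> = 0" by (simp add: a)
  finally have q1: "Q $ (True,False) = 0" using kk by simp
  obtain m m' where mm': "N m $ (True,False) * N m' $ (True,True) - N m $ (True,True) * N m' $ (True,False) \<noteq> 0"
    using row_pair[OF E1, of True] by blast
  have "N m $ (True,False) \<noteq> 0 \<or> N m $ (True,True) \<noteq> 0" "N m' $ (True,False) \<noteq> 0 \<or> N m' $ (True,True) \<noteq> 0"
    using mm' by auto
  then have nz2: "\<exists>c. N m $ (True,c) \<noteq> 0" "\<exists>c. N m' $ (True,c) \<noteq> 0" by blast+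
  have z2: "N m $ (False,c) = 0" "N m' $ (False,c) = 0" for c using nz2 r2 by blast+
  have b: "Q$(False,True) * N j $ (True,c) = \<rho> j * R $ (False,c)" if "j = m \<or> j = m'" for j c
    using e4[of False j c] z2 that by auto
  have "Q$(False,True)^2 * (N m $ (True,False) * N m' $ (True,True) - N m $ (True,True) * N m' $ (True,False))
     = (Q$(False,True) * N m $ (True,False)) * (Q$(False,True) * N m' $ (True,True)) - (Q$(False,True) * N m $ (True,True)) * (Q$(False,True) * N m' $ (True,False))"
    by (simp add: power2_eq_square algebra_simps)
  also have "\<dots> = 0" by (simp add: b)
  finally have q2: "Q $ (False,True) = 0" using mm' by simp
  show ?thesis using q1 q2 by simp
qed

lemma mm_sum_smult: "mm X (\<Sum>k\<in>S. c k *s F k) = (\<Sum>k\<in>S. c k *s mm X (F k))"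
  by (simp add: mm_sum_right mm_smult_right)

lemma smult_sum: "a *s (\<Sum>k\<in>S. F k) = (\<Sum>k\<in>S. a *s F k)" for F :: "'b \<Rightarrow> m2"
  by (induction S rule: infinite_finite_induct) (auto simp: vector_add_ldistrib)

lemma eig_indep:
  fixes xa xb ya yb ma mb pa pb pc pd :: complex
  assumes "pa*xa + pb*xb = ma*xa" "pc*xa + pd*xb = ma*xb"
    "pa*ya + pb*yb = mb*ya" "pc*ya + pd*yb = mb*yb"
    "ma \<noteq> mb" "xa \<noteq> 0 \<or> xb \<noteq> 0" "ya \<noteq> 0 \<or> yb \<noteq> 0"
  shows "xa*yb - xb*ya \<noteq> 0"
proof
  assume d: "xa*yb - xb*ya = 0"
  have h1: "(mb - ma) * (xa*ya) = 0"
  proof -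
    have "(mb - ma) * (xa*ya) = xa * (pa*ya + pb*yb) - ya * (pa*xa + pb*xb)" using assms by (simp add: algebra_simps)
    also have "\<dots> = pb * (xa*yb - xb*ya)" by (simp add: algebra_simps)
    finally show ?thesis using d by simp
  qed
  have h2: "(mb - ma) * (xb*yb) = 0"
  proof -
    have "(mb - ma) * (xb*yb) = xb * (pc*ya + pd*yb) - yb * (pc*xa + pd*xb)" using assms by (simp add: algebra_simps)
    also have "\<dots> = - pc * (xa*yb - xb*ya)" by (simp add: algebra_simps)
    finally show ?thesis using d by simp
  qed
  have h3: "(mb - ma) * (xa*yb) = 0"
  proof -
    have "(mb - ma) * (xa*yb) = xa * (pc*ya + pd*yb) - ya * (pc*xa + pd*xb) + ma * (xb*ya - xa*yb)" using assms by (simp add: algebra_simps)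
    also have "\<dots> = (pd - ma) * (xa*yb - xb*ya)" by (simp add: algebra_simps)
    also have "\<dots> = 0" using d by simp
    finally show ?thesis .
  qed
  have h4: "(mb - ma) * (xb*ya) = 0"
  proof -
    have "xb*ya = xa*yb" using d by simp
    then show ?thesis using h3 by simp
  qed
  have "mb - ma \<noteq> 0" using assms(5) by simp
  then have "xa*ya = 0" "xb*yb = 0" "xa*yb = 0" "xb*ya = 0" using h1 h2 h3 h4 by simp_all
  then have "(xa = 0 \<or> ya = 0) \<and> (xb = 0 \<or> yb = 0) \<and> (xa = 0 \<or> yb = 0) \<and> (xb = 0 \<or> ya = 0)" by simp
  then show False using assms(6,7) by blast
qed

lemma p6:
  fixes N f :: "q \<Rightarrow> m2" and P Q R :: m2 and \<mu> \<kappa> \<rho> :: "q \<Rightarrow> complex"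
  assumes E1: "\<And>V. V = (\<Sum>k\<in>UNIV. dotp (f k) V *s N k)"
    and Nz: "\<And>k. N k \<noteq> 0"
    and E3: "\<And>k. mm P (N k) = \<mu> k *s N k"
    and E4: "\<And>k. mm Q (N k) - \<kappa> k *s N k = \<rho> k *s R"
    and Pns: "\<And>c. P \<noteq> c *s one2"
  shows "\<exists>s t. Q = s *s one2 + t *s P"
proof -
  have "\<exists>a b. \<mu> a \<noteq> \<mu> b"
  proof (rule ccontr)
    assume na: "\<not> (\<exists>a b. \<mu> a \<noteq> \<mu> b)"
    define m0 where "m0 = \<mu> (False,False)"
    have all: "\<mu> k = m0" for k using na unfolding m0_def by blast
    have "mm P V = m0 *s V" for V
    proof -
      have "mm P V = mm P (\<Sum>k\<in>UNIV. dotp (f k) V *s N k)" using E1[of V] by simp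
      also have "\<dots> = (\<Sum>k\<in>UNIV. dotp (f k) V *s (m0 *s N k))"
        unfolding mm_sum_smult E3 all by (rule refl)
      also have "\<dots> = m0 *s (\<Sum>k\<in>UNIV. dotp (f k) V *s N k)"
        by (simp add: smult_sum mult.commute)
      finally show ?thesis using E1[of V] by simp
    qed
    then have "P = m0 *s one2" using mm_one_right[of P] by metis
    then show False using Pns by blast
  qed
  then obtain a b where ab: "\<mu> a \<noteq> \<mu> b" by blast
  have colnz: "\<exists>c. N k $ (False,c) \<noteq> 0 \<or> N k $ (True,c) \<noteq> 0" for k
    using Nz[of k] by (auto simp: vq_eq)
  obtain c where c: "N a $ (False,c) \<noteq> 0 \<or> N a $ (True,c) \<noteq> 0" using colnz by blast
  obtain c' where c': "N b $ (False,c') \<noteq> 0 \<or> N b $ (True,c') \<noteq> 0" using colnz by blast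
  have e3: "P$(r,False) * N k $ (False,cc) + P$(r,True) * N k $ (True,cc) = \<mu> k * N k $ (r,cc)" for k r cc
    using arg_cong[OF E3[of k], of "\<lambda>X. X $ (r,cc)"] by (simp add: mm_comp)
  define S :: m2 where "S = (\<chi> p. if snd p then N b $ (fst p, c') else N a $ (fst p, c))"
  have Sc: "S$(r,False) = N a $ (r,c)" "S$(r,True) = N b $ (r,c')" for r by (simp_all add: S_def)
  have dS: "det2 S \<noteq> 0"
  proof -
    have "N a $ (False,c) * N b $ (True,c') - N a $ (True,c) * N b $ (False,c') \<noteq> 0"
      by (rule eig_indep[where pa="P$(False,False)" and pb="P$(False,True)" and pc="P$(True,False)"
            and pd="P$(True,True)" and ma="\<mu> a" and mb="\<mu> b"])
         (use e3[where k=a and r=False and cc=c] e3[where k=a and r=True and cc=c] e3[where k=b and r=False and cc=c'] e3[where k=b and r=True and cc=c'] ab c c' in auto)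
    then show ?thesis by (simp add: det2_def Sc mult.commute)
  qed
  define Si where "Si = inv2 S"
  have SiS: "mm Si S = one2" and SSi: "mm S Si = one2" using dS inv2_left inv2_right Si_def by auto
  have PS: "mm P S = mm S (dg (\<mu> a) (\<mu> b))"
    by (simp add: vq_eq mm_comp Sc dg_def e3 mult.commute)
  have D: "mm Si (mm P S) = dg (\<mu> a) (\<mu> b)"
    by (simp add: PS mm_assoc[symmetric] SiS)
  define N' where "N' k = mm Si (N k)" for k
  define f' where "f' k = (\<chi> p. S$(False,fst p) * f k $(False,snd p) + S$(True,fst p) * f k $(True,snd p))" for k
  have df: "dotp (f' k) V = dotp (f k) (mm S V)" for k V
    by (simp add: dotp_expand f'_def mm_comp algebra_simps)
  have E1': "V = (\<Sum>k\<in>UNIV. dotp (f' k) V *s N' k)" for V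
  proof -
    have "V = mm Si (mm S V)" by (simp add: mm_assoc[symmetric] SiS)
    also have "mm S V = (\<Sum>k\<in>UNIV. dotp (f k) (mm S V) *s N k)" using E1 by blast
    finally show ?thesis by (simp add: mm_sum_smult df N'_def)
  qed
  have E3': "mm (dg (\<mu> a) (\<mu> b)) (N' k) = \<mu> k *s N' k" for k
  proof -
    have "mm (dg (\<mu> a) (\<mu> b)) (N' k) = mm Si (mm P (mm (mm S Si) (N k)))"
      by (simp add: D[symmetric] N'_def mm_assoc)
    also have "\<dots> = \<mu> k *s N' k" by (simp add: SSi E3 mm_smult_right N'_def)
    finally show ?thesis .
  qed
  define Q' where "Q' = mm Si (mm Q S)"
  have E4': "mm Q' (N' k) - \<kappa> k *s N' k = \<rho> k *s mm Si R" for k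
  proof -
    have "mm Q' (N' k) - \<kappa> k *s N' k = mm Si (mm Q (mm (mm S Si) (N k))) - \<kappa> k *s N' k"
      by (simp add: Q'_def N'_def mm_assoc)
    also have "\<dots> = mm Si (mm Q (N k) - \<kappa> k *s N k)"
      by (simp add: SSi N'_def mm_diff_right mm_smult_right)
    also have "\<dots> = \<rho> k *s mm Si R" by (simp add: E4 mm_smult_right)
    finally show ?thesis .
  qed
  have ab': "\<mu> a \<noteq> \<mu> b" by (rule ab)
  have qd: "Q' $ (False,True) = 0 \<and> Q' $ (True,False) = 0"
    by (rule p6_diag[OF E1' E3' E4' ab'])
  define t where "t = (Q'$(False,False) - Q'$(True,True)) / (\<mu> a - \<mu> b)"
  define s where "s = Q'$(False,False) - t * \<mu> a"
  have tt: "t * (\<mu> a - \<mu> b) = Q'$(False,False) - Q'$(True,True)" using ab by (simp add: t_def)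
  have "s + t * \<mu> b = Q'$(True,True)"
  proof -
    have "s + t * \<mu> b = Q'$(False,False) - t * (\<mu> a - \<mu> b)" by (simp add: s_def algebra_simps)
    then show ?thesis using tt by simp
  qed
  then have "Q' = s *s one2 + t *s dg (\<mu> a) (\<mu> b)"
    using qd by (simp add: vq_eq one2_def dg_def s_def)
  then have "mm S (mm Q' Si) = s *s one2 + t *s mm S (mm (dg (\<mu> a) (\<mu> b)) Si)"
    by (simp add: mm_add_left mm_add_right mm_smult_left mm_smult_right SSi)
  moreover have "mm S (mm Q' Si) = Q" by (simp add: Q'_def mm_assoc[symmetric] SSi) (simp add: mm_assoc SSi)
  moreover have "mm S (mm (dg (\<mu> a) (\<mu> b)) Si) = P" by (simp add: D[symmetric] mm_assoc[symmetric] SSi) (simp add: mm_assoc SSi)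
  ultimately show ?thesis by auto
qed

lemma card_q: "card (UNIV :: q set) = 4" by (simp add: UNIV_q)

lemma sum_delta_smult: "(\<Sum>k\<in>(UNIV::q set). (if k = k' then c else 0) *s (F k :: m2)) = c *s F k'"
proof -
  have "(\<Sum>k\<in>(UNIV::q set). (if k = k' then c else 0) *s F k) = (\<Sum>k\<in>UNIV. if k = k' then c *s F k else 0)"
    by (rule sum.cong) auto
  also have "\<dots> = c *s F k'" by (simp add: sum.delta')
  finally show ?thesis .
qed

lemma no6:
  fixes A B C :: "nat \<Rightarrow> m2"
  assumes H: "\<And>X V. mm X V = (\<Sum>l<6. (dotp (A l) X * dotp (B l) V) *s C l)"
  shows False
proof -
  have fr: "X = (\<Sum>l<6. dotp (A l) X *s (dotp (B l) one2 *s C l))" for X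
    using H[of X one2] by (simp add: vector_smult_assoc)
  obtain g :: "q \<Rightarrow> nat" and u where g: "inj g" "\<And>k. g k < 6"
    and du: "\<And>k k'. dotp (A (g k)) (u k') = (if k = k' then 1 else 0)"
    and ex: "\<And>w. w = (\<Sum>k\<in>UNIV. dotp (A (g k)) w *s u k)"
    using select_dual[where A=A and n=6 and N="\<lambda>l. dotp (B l) one2 *s C l", OF fr] by blast
  have "\<exists>k k'. k \<noteq> k' \<and> (det2 (u k) \<noteq> 0 \<or> det2 (u k') \<noteq> 0 \<or> bf (u k) (u k') \<noteq> 0)"
  proof (rule ccontr)
    assume "\<not> ?thesis"
    then have z: "\<And>k k'. k \<noteq> k' \<Longrightarrow> det2 (u k) = 0 \<and> det2 (u k') = 0 \<and> bf (u k) (u k') = 0" by blast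
    have zb: "bf (u k) (u k') = 0" for k k'
    proof (cases "k = k'")
      case True
      obtain k'' where "k'' \<noteq> k" by (metis prod.inject)
      then show ?thesis using z[of k k''] True by (simp add: bf_self)
    next
      case False then show ?thesis using z by blast
    qed
    define cc where "cc k = dotp (A (g k)) one2" for k
    have "bf one2 one2 = bf (\<Sum>k\<in>UNIV. cc k *s u k) (\<Sum>k\<in>UNIV. cc k *s u k)"
      using ex[of one2] unfolding cc_def by simp
    also have "\<dots> = 0" by (simp add: bf_sum_left bf_sum_right zb)
    finally show False by (simp add: bf_one)
  qed
  then obtain k k' where kk: "k \<noteq> k'" and kd: "det2 (u k) \<noteq> 0 \<or> det2 (u k') \<noteq> 0 \<or> bf (u k) (u k') \<noteq> 0"
    by blast
  have uvan: "dotp (A (g j)) (u k) = 0" "dotp (A (g j)) (u k') = 0" if "j \<noteq> k" "j \<noteq> k'" for j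
    using du that by auto
  obtain U0 U1 where U0: "det2 U0 \<noteq> 0"
    and van: "\<And>j. j \<noteq> k \<Longrightarrow> j \<noteq> k' \<Longrightarrow> dotp (A (g j)) U0 = 0 \<and> dotp (A (g j)) U1 = 0"
    and nsc: "\<And>c. U1 \<noteq> c *s U0"
  proof -
    have nk: "u k \<noteq> c *s u k'" for c
    proof
      assume "u k = c *s u k'"
      then have "dotp (A (g k)) (u k) = c * dotp (A (g k)) (u k')" by (simp add: dotp_smult)
      then show False using du kk by simp
    qed
    have nk': "u k' \<noteq> c *s u k" for c
    proof
      assume "u k' = c *s u k"
      then have "dotp (A (g k')) (u k') = c * dotp (A (g k')) (u k)" by (simp add: dotp_smult)
      then show False using du kk by (simp add: eq_commute)
    qed
    show thesis
    proof (cases "det2 (u k) \<noteq> 0")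
      case True
      show thesis using that[of "u k" "u k'"] True uvan nk' by blast
    next
      case F1: False
      show thesis
      proof (cases "det2 (u k') \<noteq> 0")
        case True
        show thesis using that[of "u k'" "u k"] True uvan nk by blast
      next
        case False
        have d: "det2 (u k + u k') \<noteq> 0" using F1 False kd by (simp add: det2_add)
        have dk: "dotp (A (g k')) (u k) = 0" "dotp (A (g k')) (u k') = 1" "dotp (A (g k)) (u k) = 1"
          using du[of k' k] du[of k' k'] du[of k k] kk by auto
        have n: "u k \<noteq> c *s (u k + u k')" for c
        proof
          assume h: "u k = c *s (u k + u k')"
          have "dotp (A (g k')) (u k) = dotp (A (g k')) (c *s (u k + u k'))" using h by (rule arg_cong)
          also have "\<dots> = c * (dotp (A (g k')) (u k) + dotp (A (g k')) (u k'))" by (simp only: dotp_add dotp_smult)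
          finally have "c = 0" unfolding dk by simp
          then have "u k = 0 *s (u k + u k')" using h by simp
          then have "u k = 0" by (simp only: vector_smult_lzero)
          then have "dotp (A (g k)) (u k) = 0" by simp
          then show False using dk by simp
        qed
        have v: "dotp (A (g jj)) (u k + u k') = 0 \<and> dotp (A (g jj)) (u k) = 0" if "jj \<noteq> k" "jj \<noteq> k'" for jj
          using uvan[OF that] by (simp add: dotp_add)
        show thesis using that[of "u k + u k'" "u k"] d v n by blast
      qed
    qed
  qed
  obtain k2 k3 where k23: "UNIV - {k,k'} = {k2,k3}" "k2 \<noteq> k3"
  proof -
    have "card (UNIV - {k,k'}) = 2" using kk by (simp add: card_q card_Diff_subset)
    then show thesis using that card_2_iff by metis
  qed
  have k2: "k2 \<noteq> k" "k2 \<noteq> k'" and k3: "k3 \<noteq> k" "k3 \<noteq> k'" using k23 by blast+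
  define i where "i = g k2"
  define j where "j = g k3"
  define M where "M = u k2"
  have ij: "i \<noteq> j" "i < 6" "j < 6" using g k23 by (auto simp: i_def j_def dest: injD)
  have Mi: "dotp (A i) M = 1" and Mj: "dotp (A j) M = 0"
    using du k23 by (auto simp: i_def j_def M_def)
  have V0: "dotp (A i) U0 = 0" "dotp (A j) U0 = 0" "dotp (A i) U1 = 0" "dotp (A j) U1 = 0"
    using van k2 k3 by (auto simp: i_def j_def)
  define SS where "SS = {..<6::nat} - {i,j}"
  have cS: "card SS = 4" using ij by (simp add: SS_def card_Diff_subset)
  obtain \<sigma> where \<sigma>: "bij_betw \<sigma> (UNIV::q set) SS"
    using finite_same_card_bij[of "UNIV::q set" SS] cS by (auto simp: card_q SS_def)
  have split: "(\<Sum>l<6. F l) = F i + F j + (\<Sum>k\<in>UNIV. F (\<sigma> k))" for F :: "nat \<Rightarrow> m2"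
  proof -
    have "(\<Sum>k\<in>UNIV. F (\<sigma> k)) = (\<Sum>l\<in>SS. F l)" by (rule sum.reindex_bij_betw[OF \<sigma>])
    moreover have "(\<Sum>l<6. F l) = F i + (\<Sum>l\<in>{..<6} - {i}. F l)" using ij by (simp add: sum.remove)
    moreover have "(\<Sum>l\<in>{..<6} - {i}. F l) = F j + (\<Sum>l\<in>{..<6} - {i} - {j}. F l)" using ij by (simp add: sum.remove)
    moreover have "{..<6} - {i} - {j} = SS" by (auto simp: SS_def)
    ultimately show ?thesis by (simp add: add.assoc)
  qed
  define Ui where "Ui = inv2 U0"
  have UiU0: "mm Ui U0 = one2" using U0 inv2_left Ui_def by simp
  define Nl where "Nl l = mm Ui (C l)" for l
  have red: "mm Ui (mm X V) = (\<Sum>k\<in>UNIV. (dotp (A (\<sigma> k)) X * dotp (B (\<sigma> k)) V) *s Nl (\<sigma> k))"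
    if "dotp (A i) X = 0" "dotp (A j) X = 0" for X V
  proof -
    have "mm X V = (\<Sum>l<6. (dotp (A l) X * dotp (B l) V) *s C l)" by (rule H)
    also have "\<dots> = (\<Sum>k\<in>UNIV. (dotp (A (\<sigma> k)) X * dotp (B (\<sigma> k)) V) *s C (\<sigma> k))"
      unfolding split using that by simp
    finally show ?thesis by (simp add: mm_sum_smult Nl_def)
  qed
  define a0 where "a0 k = dotp (A (\<sigma> k)) U0" for k
  define f where "f k = a0 k *s B (\<sigma> k)" for k
  define N where "N k = Nl (\<sigma> k)" for k
  have E1: "V = (\<Sum>k\<in>UNIV. dotp (f k) V *s N k)" for V
  proof -
    have "V = mm Ui (mm U0 V)" by (simp add: mm_assoc[symmetric] UiU0)
    then show ?thesis using red[of U0 V] V0 by (simp add: f_def N_def a0_def dotp_smult_left)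
  qed
  have E2: "dotp (f k) (N k') = (if k = k' then 1 else 0)" for k k'
    by (rule biorth[OF E1])
  have a0nz: "a0 k \<noteq> 0" for k using E2[of k k] by (auto simp: f_def dotp_smult_left)
  have bN: "dotp (B (\<sigma> k)) (N k') = (if k = k' then 1 / a0 k else 0)" for k k'
    using E2[of k k'] a0nz[of k] by (auto simp: f_def dotp_smult_left field_simps)
  have Nz: "N k \<noteq> 0" for k using E2[of k k] by auto
  define P where "P = mm Ui U1"
  have E3: "mm P (N k') = (dotp (A (\<sigma> k')) U1 / a0 k') *s N k'" for k'
  proof -
    have "mm P (N k') = (\<Sum>k\<in>UNIV. (dotp (A (\<sigma> k)) U1 * dotp (B (\<sigma> k)) (N k')) *s N k)"
      unfolding P_def mm_assoc using red[of U1 "N k'"] V0 by (simp add: N_def)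
    also have "\<dots> = (\<Sum>k\<in>UNIV. (if k = k' then dotp (A (\<sigma> k')) U1 / a0 k' else 0) *s N k)"
      by (rule sum.cong) (auto simp: bN)
    finally show ?thesis by (simp add: sum_delta_smult)
  qed
  define Q where "Q = mm Ui M"
  define R where "R = Nl i"
  have E4: "mm Q (N k') - (dotp (A (\<sigma> k')) M / a0 k') *s N k' = (dotp (A i) M * dotp (B i) (N k')) *s R" for k'
  proof -
    have "mm Q (N k') = (dotp (A i) M * dotp (B i) (N k')) *s R
        + (\<Sum>k\<in>UNIV. (dotp (A (\<sigma> k)) M * dotp (B (\<sigma> k)) (N k')) *s N k)"
    proof -
      have "mm M (N k') = (\<Sum>l<6. (dotp (A l) M * dotp (B l) (N k')) *s C l)" by (rule H)
      also have "\<dots> = (dotp (A i) M * dotp (B i) (N k')) *s C i + (\<Sum>k\<in>UNIV. (dotp (A (\<sigma> k)) M * dotp (B (\<sigma> k)) (N k')) *s C (\<sigma> k))"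
        unfolding split using Mj by simp
      finally show ?thesis unfolding Q_def mm_assoc by (simp add: mm_add_right mm_sum_smult mm_smult_right Nl_def N_def R_def)
    qed
    also have "(\<Sum>k\<in>UNIV. (dotp (A (\<sigma> k)) M * dotp (B (\<sigma> k)) (N k')) *s N k)
        = (\<Sum>k\<in>UNIV. (if k = k' then dotp (A (\<sigma> k')) M / a0 k' else 0) *s N k)"
      by (rule sum.cong) (auto simp: bN)
    finally show ?thesis by (simp add: sum_delta_smult)
  qed
  have Pns: "P \<noteq> c *s one2" for c
  proof
    assume "P = c *s one2"
    then have "mm U0 P = c *s U0" by (simp add: mm_smult_right)
    moreover have "mm U0 P = U1"
      unfolding P_def Ui_def by (simp add: mm_assoc[symmetric] inv2_right U0)
    ultimately show False using nsc by simp
  qed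
  obtain s t where "Q = s *s one2 + t *s P"
    using p6[OF E1 Nz E3 E4 Pns] by blast
  then have "mm U0 Q = s *s U0 + t *s U1"
    by (simp add: mm_add_right mm_smult_right P_def mm_assoc[symmetric] inv2_right U0 Ui_def)
  moreover have "mm U0 Q = M"
    unfolding Q_def Ui_def by (simp add: mm_assoc[symmetric] inv2_right U0)
  ultimately have "M = s *s U0 + t *s U1" by simp
  then have "dotp (A i) M = 0" by (simp add: dotp_add dotp_smult V0)
  then show False using Mi by simp
qed

definition cf :: "complex \<times> complex \<times> complex \<times> complex \<Rightarrow> q \<Rightarrow> complex" where
  "cf t p = (case t of (w,x,y,z) \<Rightarrow> if fst p then (if snd p then z else y) else (if snd p then x else w))"

definition sA :: "nat \<Rightarrow> q \<Rightarrow> complex" where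
  "sA l p = cf ([(1,0,0,1),(0,0,1,1),(1,0,0,0),(0,0,0,1),(1,1,0,0),(-1,0,1,0),(0,1,0,-1)] ! l) (snd p, fst p)"
definition sB :: "nat \<Rightarrow> q \<Rightarrow> complex" where
  "sB l p = cf ([(1,0,0,1),(1,0,0,0),(0,1,0,-1),(-1,0,1,0),(0,0,0,1),(1,1,0,0),(0,0,1,1)] ! l) p"
definition sC :: "nat \<Rightarrow> q \<Rightarrow> complex" where
  "sC l p = cf ([(1,0,0,1),(0,0,1,-1),(0,1,0,1),(1,0,1,0),(-1,1,0,0),(0,0,0,1),(1,0,0,0)] ! l) p"

lemma strassen: "Phi3 = (\<lambda>i j k. \<Sum>l<7. sA l i * sB l j * sC l k)"
proof (intro ext)
  fix i j k :: q
  obtain a1 a2 where i: "i = (a1,a2)" by fastforce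
  obtain b1 b2 where j: "j = (b1,b2)" by fastforce
  obtain c1 c2 where k: "k = (c1,c2)" by fastforce
  show "Phi3 i j k = (\<Sum>l<7. sA l i * sB l j * sC l k)"
    unfolding i j k
    by (cases a1; cases a2; cases b1; cases b2; cases c1; cases c2)
       (simp_all add: Phi3_def Phi_def sA_def sB_def sC_def cf_def numeral_eq_Suc)
qed

lemma bridge:
  fixes a b c :: "nat \<Rightarrow> q \<Rightarrow> complex"
  assumes D: "Phi3 = (\<lambda>i j k. \<Sum>l<n. a l i * b l j * c l k)"
  shows "mm X V = (\<Sum>l<n. (dotp (\<chi> p. a l (snd p, fst p)) X * dotp (\<chi> p. b l p) V) *s (\<chi> p. c l p))"
proof -
  define Xs where "Xs i = X $ (snd i, fst i)" for i :: q
  have dA: "dotp (\<chi> p. a l (snd p, fst p)) X = (\<Sum>i\<in>UNIV. a l i * Xs i)" for l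
    by (simp add: dotp_expand sum_q Xs_def)
  have dB: "dotp (\<chi> p. b l p) V = (\<Sum>j\<in>UNIV. b l j * V $ j)" for l
    by (simp add: dotp_def)
  have lhs: "mm X V $ k = (\<Sum>i\<in>UNIV. \<Sum>j\<in>UNIV. Xs i * V $ j * Phi3 i j k)" for k
  proof -
    obtain c1 c2 where k: "k = (c1,c2)" by fastforce
    show ?thesis unfolding k
      by (cases c1; cases c2) (simp_all add: mm_comp sum_q Xs_def Phi3_def Phi_def)
  qed
  have rhs: "(\<Sum>i\<in>UNIV. \<Sum>j\<in>UNIV. Xs i * V $ j * Phi3 i j k)
      = (\<Sum>l<n. (\<Sum>i\<in>UNIV. a l i * Xs i) * (\<Sum>j\<in>UNIV. b l j * V $ j) * c l k)" for k
  proof -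
    have "(\<Sum>i\<in>UNIV. \<Sum>j\<in>UNIV. Xs i * V $ j * Phi3 i j k)
        = (\<Sum>i\<in>UNIV. \<Sum>j\<in>UNIV. \<Sum>l<n. Xs i * V $ j * (a l i * b l j * c l k))"
      by (simp add: D sum_distrib_left)
    also have "\<dots> = (\<Sum>l<n. \<Sum>i\<in>UNIV. \<Sum>j\<in>UNIV. Xs i * V $ j * (a l i * b l j * c l k))"
      by (simp add: sum.swap[of _ "{..<n}"])
    also have "\<dots> = (\<Sum>l<n. (\<Sum>i\<in>UNIV. a l i * Xs i) * (\<Sum>j\<in>UNIV. b l j * V $ j) * c l k)"
      unfolding sum_product sum_distrib_right by (simp add: sum_distrib_left mult_ac)
    finally show ?thesis .
  qed
  show ?thesis
    by (simp add: vec_eq_iff lhs rhs sum_component dA dB)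
qed

theorem lemma1:
  shows "tensor_rank Phi3 = 7"
  unfolding tensor_rank_def
proof (rule Least_equality)
  show "\<exists>(a :: nat \<Rightarrow> q \<Rightarrow> complex) (b :: nat \<Rightarrow> q \<Rightarrow> complex) (c :: nat \<Rightarrow> q \<Rightarrow> complex).
          Phi3 = (\<lambda>i j k. \<Sum>l<7. a l i * b l j * c l k)"
    using strassen by blast
next
  fix r
  assume "\<exists>(a :: nat \<Rightarrow> q \<Rightarrow> complex) (b :: nat \<Rightarrow> q \<Rightarrow> complex) (c :: nat \<Rightarrow> q \<Rightarrow> complex).
          Phi3 = (\<lambda>i j k. \<Sum>l<r. a l i * b l j * c l k)"
  then obtain a b c :: "nat \<Rightarrow> q \<Rightarrow> complex" where D: "Phi3 = (\<lambda>i j k. \<Sum>l<r. a l i * b l j * c l k)"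
    by blast
  show "7 \<le> r"
  proof (rule ccontr)
    assume "\<not> 7 \<le> r"
    then have r6: "r \<le> 6" by simp
    define a' where "a' l = (if l < r then a l else (\<lambda>_. 0))" for l
    have D': "Phi3 = (\<lambda>i j k. \<Sum>l<6. a' l i * b l j * c l k)"
    proof (intro ext)
      fix i j k
      have "(\<Sum>l<6. a' l i * b l j * c l k) = (\<Sum>l<6. if l \<in> {..<r} then a l i * b l j * c l k else 0)"
        by (rule sum.cong) (auto simp: a'_def)
      also have "\<dots> = (\<Sum>l\<in>{..<6} \<inter> {..<r}. a l i * b l j * c l k)"
        by (simp add: sum.inter_restrict)
      also have "{..<6} \<inter> {..<r} = {..<r}" using r6 by auto
      finally have e1: "(\<Sum>l<6. a' l i * b l j * c l k) = (\<Sum>l<r. a l i * b l j * c l k)" .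
      have e2: "Phi3 i j k = (\<Sum>l<r. a l i * b l j * c l k)" unfolding D by simp
      show "Phi3 i j k = (\<Sum>l<6. a' l i * b l j * c l k)" using e1 e2 by simp
    qed
    show False
      by (rule no6[OF bridge[OF D']])
  qed
qed

end
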